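(* Under the hypotheses below, assume moreover (UPS): whenever $(x_n)\subset\mathcal{M}$ and $\beta_n\to+\infty$ satisfy $J_{\beta_n}(x_n)\to c_\infty$ and $J_{\beta_n}(\eta_{\beta_n}(x_n))\to c_\infty$, there exists $\bar x\in\mathcal{M}$ such that, up to a subsequence, $x_n\to\bar x$ and $\eta_{\beta_n}(x_n)\to\bar x$. Then $\mathcal{C}_*\cap\mathcal{K}_\infty\neq\emptyset$. More precisely, for every sequence $\beta_n\to+\infty$ and $A_n\in\mathcal{F}$ optimal for $J_{\beta_n}$ at $c_{\beta_n}$, there exists $\bar x\in\mathcal{C}_*\cap\mathcal{K}_\infty\cap\limsup_nA_n$.
   Context: Hypotheses: $(\mathcal{M},\mathrm{dist})$ is a metric space, $\mathcal{F}\subset2^{\mathcal{M}}$; $J_\beta:\mathcal{M}\to\mathbb{R}\cup\{+\infty\}$, $0<\beta<+\infty$, are lower semi-continuous with $J_{\beta_1}\le J_{\beta_2}$ for $\beta_1\le\beta_2$; $J_\infty=\sup_{\beta>0}J_\beta$; $c_\beta=\inf_{A\in\mathcal{F}}\sup_AJ_\beta\in\mathbb{R}$ for all $0<\beta\le+\infty$; every $A\in\mathcal{F}$ is closed; for every $(A_n)\subset\mathcal{F}$ such that for some $\beta$, $A_n\subset\mathcal{M}^{c_\infty+1}_\beta:=\{J_\beta\le c_\infty+1\}$ for all $n$, $\limsup_nA_n\in\mathcal{F}$ (here $\limsup_nA_n$ is the set of limits of sequences $x_{n_j}\in A_{n_j}$, $n_j\to\infty$); for each $0<\beta\le+\infty$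 a map $\eta_\beta:\mathcal{M}^{c_\infty+1}_\beta\to\mathcal{M}^{c_\infty+1}_\beta$ with $\eta_\beta(A)\in\mathcal{F}$ whenever $A\in\mathcal{F}$, $A\subset\mathcal{M}^{c_\infty+1}_\beta$, and $J_\beta(\eta_\beta(x))\le J_\beta(x)$; and for each $0<\beta\le+\infty$, every sequence $x_n$ with $J_\beta(x_n)\to c_\beta$, $J_\beta(\eta_\beta(x_n))\to c_\beta$ has a subsequence converging to a point of $\mathcal{K}_\beta=\{x:J_\beta(x)=J_\beta(\eta_\beta(x))=c_\beta\}$. A set $A$ is optimal for $J$ at $c$ if $A\in\mathcal{F}$ and $\sup_AJ=c$. $\mathcal{C}_*$ is the set of $x\in\mathcal{M}$ for which there are $(x_n)\subset\mathcal{M}$, $\beta_n\to+\infty$ with $x_n\to x$, $J_{\beta_n}(x_n)\to c_\infty$ and $J_{\beta_n}(\eta_{\beta_n}(x_n))\to c_\infty$. *)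

theory Defs
  imports "HOL-Analysis.Analysis"
begin

definition lsc :: "('a::topological_space \<Rightarrow> ereal) \<Rightarrow> bool" where
  "lsc f \<longleftrightarrow> (\<forall>t. open {x. t < f x})"

definition Jinf :: "(real \<Rightarrow> 'a \<Rightarrow> ereal) \<Rightarrow> 'a \<Rightarrow> ereal" where
  "Jinf J x = (SUP \<beta>\<in>{0<..}. J \<beta> x)"

definition minimax :: "'a set set \<Rightarrow> ('a \<Rightarrow> ereal) \<Rightarrow> ereal" where
  "minimax F f = (INF A\<in>F. SUP x\<in>A. f x)"

definition optimal :: "'a set set \<Rightarrow> ('a \<Rightarrow> ereal) \<Rightarrow> ereal \<Rightarrow> 'a set \<Rightarrow> bool" where
  "optimal F f c A \<longleftrightarrow> A \<in> F \<and> (SUP x\<in>A. f x) = c"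

text \<open>Kuratowski upper limit: limits of sequences x_j in A_(n_j), n_j tending to infinity.\<close>
definition seq_limsup :: "(nat \<Rightarrow> 'a::topological_space set) \<Rightarrow> 'a set" where
  "seq_limsup A = {x. \<exists>r y. filterlim r at_top at_top \<and> (\<forall>j. y j \<in> A (r j)) \<and> y \<longlonglongrightarrow> x}"

definition Kset :: "('a \<Rightarrow> ereal) \<Rightarrow> ('a \<Rightarrow> 'a) \<Rightarrow> ereal \<Rightarrow> 'a set" where
  "Kset f \<eta> c = {x. f x = c \<and> f (\<eta> x) = c}"

definition Cstar :: "(real \<Rightarrow> 'a \<Rightarrow> ereal) \<Rightarrow> (real \<Rightarrow> 'a \<Rightarrow> 'a) \<Rightarrow> ereal \<Rightarrow> 'a::topological_space set" where
  "Cstar J \<eta> cinf = {x. \<exists>xs \<beta>s. (\<forall>n. 0 < \<beta>s n) \<and> filterlim \<beta>s at_top sequentially \<and>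
       xs \<longlonglongrightarrow> x \<and> (\<lambda>n. J (\<beta>s n) (xs n)) \<longlonglongrightarrow> cinf \<and>
       (\<lambda>n. J (\<beta>s n) (\<eta> (\<beta>s n) (xs n))) \<longlonglongrightarrow> cinf}"

end

theory Submission
  imports Defs
begin

lemma lsc_le:
  assumes "lsc f" "y \<longlonglongrightarrow> x" "\<And>t. L < t \<Longrightarrow> eventually (\<lambda>j. f (y j) \<le> t) sequentially"
  shows "f x \<le> L"
proof (rule ccontr)
  assume "\<not> f x \<le> L" hence "L < f x" by simp
  then obtain t where t: "L < t" "t < f x" using dense by blast
  have "open {z. t < f z}" using assms(1) lsc_def by blast
  hence "eventually (\<lambda>j. y j \<in> {z. t < f z}) sequentially"
    using t(2) by (intro topological_tendstoD[OF assms(2)]) auto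
  moreover have "eventually (\<lambda>j. f (y j) \<le> t) sequentially" using assms(3) t(1) .
  ultimately have "eventually (\<lambda>j. False) sequentially" by eventually_elim auto
  thus False by simp
qed

lemma lsc_gt:
  assumes "lsc f" "y \<longlonglongrightarrow> x" "t < f x"
  shows "eventually (\<lambda>j. t < f (y j)) sequentially"
proof -
  have "open {z. t < f z}" using assms(1) lsc_def by blast
  hence "eventually (\<lambda>j. y j \<in> {z. t < f z}) sequentially"
    using assms(3) by (intro topological_tendstoD[OF assms(2)]) auto
  thus ?thesis by simp
qed

theorem theorem2p11:
  fixes F :: "'a::metric_space set set"
    and J :: "real \<Rightarrow> 'a \<Rightarrow> ereal"
    and \<eta> :: "real \<Rightarrow> 'a \<Rightarrow> 'a"
    and \<eta>inf :: "'a \<Rightarrow> 'a"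
  defines "c \<equiv> \<lambda>\<beta>. minimax F (J \<beta>)"
    and "cinf \<equiv> minimax F (Jinf J)"
  assumes lsc: "\<And>\<beta>. 0 < \<beta> \<Longrightarrow> lsc (J \<beta>)"
    and not_minf: "\<And>\<beta> x. 0 < \<beta> \<Longrightarrow> J \<beta> x \<noteq> -\<infinity>"
    and mono: "\<And>\<beta>1 \<beta>2 x. 0 < \<beta>1 \<Longrightarrow> \<beta>1 \<le> \<beta>2 \<Longrightarrow> J \<beta>1 x \<le> J \<beta>2 x"
    and c_real: "\<And>\<beta>. 0 < \<beta> \<Longrightarrow> \<bar>c \<beta>\<bar> \<noteq> \<infinity>"
    and cinf_real: "\<bar>cinf\<bar> \<noteq> \<infinity>"
    and F_closed: "\<And>A. A \<in> F \<Longrightarrow> closed A"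
    and F_limsup: "\<And>A \<beta>. 0 < \<beta> \<Longrightarrow> (\<forall>n. A n \<in> F \<and> A n \<subseteq> {x. J \<beta> x \<le> cinf + 1})
                      \<Longrightarrow> seq_limsup A \<in> F"
    and F_limsup_inf: "\<And>A. (\<forall>n. A n \<in> F \<and> A n \<subseteq> {x. Jinf J x \<le> cinf + 1})
                      \<Longrightarrow> seq_limsup A \<in> F"
    and eta_maps: "\<And>\<beta> x. 0 < \<beta> \<Longrightarrow> J \<beta> x \<le> cinf + 1 \<Longrightarrow> J \<beta> (\<eta> \<beta> x) \<le> cinf + 1"
    and eta_F: "\<And>\<beta> A. 0 < \<beta> \<Longrightarrow> A \<in> F \<Longrightarrow> A \<subseteq> {x. J \<beta> x \<le> cinf + 1} \<Longrightarrow> \<eta> \<beta> ` A \<in> F"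
    and eta_decr: "\<And>\<beta> x. 0 < \<beta> \<Longrightarrow> J \<beta> x \<le> cinf + 1 \<Longrightarrow> J \<beta> (\<eta> \<beta> x) \<le> J \<beta> x"
    and etainf_maps: "\<And>x. Jinf J x \<le> cinf + 1 \<Longrightarrow> Jinf J (\<eta>inf x) \<le> cinf + 1"
    and etainf_F: "\<And>A. A \<in> F \<Longrightarrow> A \<subseteq> {x. Jinf J x \<le> cinf + 1} \<Longrightarrow> \<eta>inf ` A \<in> F"
    and etainf_decr: "\<And>x. Jinf J x \<le> cinf + 1 \<Longrightarrow> Jinf J (\<eta>inf x) \<le> Jinf J x"
    and PS: "\<And>\<beta> xs. 0 < \<beta> \<Longrightarrow> (\<lambda>n. J \<beta> (xs n)) \<longlonglongrightarrow> c \<beta> \<Longrightarrow>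
               (\<lambda>n. J \<beta> (\<eta> \<beta> (xs n))) \<longlonglongrightarrow> c \<beta> \<Longrightarrow>
               \<exists>r x. strict_mono r \<and> (xs \<circ> r) \<longlonglongrightarrow> x \<and> x \<in> Kset (J \<beta>) (\<eta> \<beta>) (c \<beta>)"
    and PS_inf: "\<And>xs. (\<lambda>n. Jinf J (xs n)) \<longlonglongrightarrow> cinf \<Longrightarrow>
               (\<lambda>n. Jinf J (\<eta>inf (xs n))) \<longlonglongrightarrow> cinf \<Longrightarrow>
               \<exists>r x. strict_mono r \<and> (xs \<circ> r) \<longlonglongrightarrow> x \<and> x \<in> Kset (Jinf J) \<eta>inf cinf"
    and UPS: "\<And>xs \<beta>s. (\<forall>n. 0 < \<beta>s n) \<Longrightarrow> filterlim \<beta>s at_top sequentially \<Longrightarrow>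
               (\<lambda>n. J (\<beta>s n) (xs n)) \<longlonglongrightarrow> cinf \<Longrightarrow>
               (\<lambda>n. J (\<beta>s n) (\<eta> (\<beta>s n) (xs n))) \<longlonglongrightarrow> cinf \<Longrightarrow>
               \<exists>xbar r. strict_mono r \<and> (xs \<circ> r) \<longlonglongrightarrow> xbar \<and>
                        (\<lambda>n. \<eta> (\<beta>s (r n)) (xs (r n))) \<longlonglongrightarrow> xbar"
  shows "Cstar J \<eta> cinf \<inter> Kset (Jinf J) \<eta>inf cinf \<noteq> {} \<and>
         (\<forall>\<beta>s A. (\<forall>n. 0 < \<beta>s n) \<longrightarrow> filterlim \<beta>s at_top sequentially \<longrightarrow>
            (\<forall>n. optimal F (J (\<beta>s n)) (c (\<beta>s n)) (A n)) \<longrightarrow>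
            (\<exists>xbar. xbar \<in> Cstar J \<eta> cinf \<inter> Kset (Jinf J) \<eta>inf cinf \<inter> seq_limsup A))"
proof -
  obtain c0 where c0: "cinf = ereal c0" using cinf_real by (cases cinf) auto
  have Jle: "\<And>\<beta> x. 0<\<beta> \<Longrightarrow> J \<beta> x \<le> Jinf J x"
    unfolding Jinf_def by (rule SUP_upper) simp
  have cle: "\<And>\<beta>. 0<\<beta> \<Longrightarrow> c \<beta> \<le> cinf"
    unfolding c_def cinf_def minimax_def by (intro INF_mono' SUP_mono' Jle)
  have Cle1: "cinf \<le> cinf + 1" using c0 by simp
  have minimax_le: "\<And>B f. B \<in> F \<Longrightarrow> minimax F f \<le> (SUP x\<in>B. f x)"
    unfolding minimax_def by (rule INF_lower)
  have main: "\<exists>xbar. xbar \<in> Cstar J \<eta> cinf \<inter> Kset (Jinf J) \<eta>inf cinf \<inter> seq_limsup A"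
    if pos: "\<forall>n. 0 < \<beta>s n" and lim: "filterlim \<beta>s at_top sequentially"
      and opt: "\<forall>n. optimal F (J (\<beta>s n)) (c (\<beta>s n)) (A n)" for \<beta>s A
  proof -
    have AF: "\<And>n. A n \<in> F" using opt optimal_def by blast
    have AJ: "J (\<beta>s n) x \<le> cinf" if "x \<in> A n" for n x
    proof -
      have "J (\<beta>s n) x \<le> (SUP x\<in>A n. J (\<beta>s n) x)" using that by (rule SUP_upper)
      also have "\<dots> = c (\<beta>s n)" using opt optimal_def by blast
      also have "\<dots> \<le> cinf" using cle pos by blast
      finally show ?thesis .
    qed
    define D where "D n = \<eta> (\<beta>s n) ` A n" for n
    have Asub: "\<And>n. A n \<subseteq> {x. J (\<beta>s n) x \<le> cinf + 1}" using AJ Cle1 by (auto intro: order_trans)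
    have DF: "\<And>n. D n \<in> F" unfolding D_def using eta_F pos AF Asub by blast
    have DJ: "J (\<beta>s n) y \<le> cinf" if yD: "y \<in> D n" for n y
    proof -
      obtain x where x: "x \<in> A n" "y = \<eta> (\<beta>s n) x" using yD unfolding D_def by auto
      have "J (\<beta>s n) y \<le> J (\<beta>s n) x" using x eta_decr pos Asub by blast
      also have "\<dots> \<le> cinf" using AJ x by blast
      finally show ?thesis .
    qed
    obtain N where N: "\<And>n. n \<ge> N \<Longrightarrow> 1 \<le> \<beta>s n"
      using lim unfolding filterlim_at_top eventually_sequentially by blast
    define \<beta>0 where "\<beta>0 = Min (insert 1 (\<beta>s ` {..<N}))"
    have b0pos: "0 < \<beta>0" unfolding \<beta>0_def using pos by simp
    have b0le: "\<beta>0 \<le> \<beta>s n" for n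
    proof (cases "n < N")
      case True thus ?thesis unfolding \<beta>0_def by (intro Min_le) auto
    next
      case False
      have "\<beta>0 \<le> 1" unfolding \<beta>0_def by (intro Min_le) auto
      also have "1 \<le> \<beta>s n" using N False by simp
      finally show ?thesis .
    qed
    have Dsub: "D n \<subseteq> {x. J \<beta>0 x \<le> cinf + 1}" for n
    proof
      fix y assume y: "y \<in> D n"
      have "J \<beta>0 y \<le> J (\<beta>s n) y" using mono b0pos b0le by blast
      also have "\<dots> \<le> cinf" using DJ y by blast
      also have "\<dots> \<le> cinf + 1" by (rule Cle1)
      finally show "y \<in> {x. J \<beta>0 x \<le> cinf + 1}" by simp
    qed
    have DbarF: "seq_limsup D \<in> F" using F_limsup[OF b0pos] DF Dsub by blast
    have Dbar_closed: "closed (seq_limsup D)" using F_closed DbarF by blast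
    have Dbar_J: "Jinf J y \<le> cinf" if yD: "y \<in> seq_limsup D" for y
    proof -
      obtain r w where r: "filterlim r at_top at_top" and w: "\<And>j. w j \<in> D (r j)"
        and wl: "w \<longlonglongrightarrow> y" using yD unfolding seq_limsup_def by blast
      have lr: "filterlim (\<lambda>j. \<beta>s (r j)) at_top sequentially" using filterlim_compose[OF lim r] .
      show "Jinf J y \<le> cinf" unfolding Jinf_def
      proof (rule SUP_least)
        fix \<beta> :: real assume "\<beta> \<in> {0<..}" hence bp: "0<\<beta>" by simp
        have ev: "eventually (\<lambda>j. \<beta> \<le> \<beta>s (r j)) sequentially" using lr unfolding filterlim_at_top by blast
        show "J \<beta> y \<le> cinf"
        proof (rule lsc_le[OF lsc[OF bp] wl])
          fix t assume ct: "cinf < t"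
          show "eventually (\<lambda>j. J \<beta> (w j) \<le> t) sequentially" using ev
          proof eventually_elim
            case (elim j)
            have "J \<beta> (w j) \<le> J (\<beta>s (r j)) (w j)" using mono bp elim by blast
            also have "\<dots> \<le> cinf" using DJ w by blast
            finally show ?case using ct by simp
          qed
        qed
      qed
    qed
    have sub2: "seq_limsup D \<subseteq> {x. Jinf J x \<le> cinf + 1}" using Dbar_J Cle1 by (auto intro: order_trans)
    have EF: "\<eta>inf ` seq_limsup D \<in> F" using etainf_F DbarF sub2 by blast
    have Ebig: "cinf \<le> (SUP x\<in>seq_limsup D. Jinf J (\<eta>inf x))"
      using minimax_le[OF EF, of "Jinf J"] unfolding cinf_def by (simp add: image_image)
    have exZ: "\<forall>k::nat. \<exists>z. z \<in> seq_limsup D \<and> ereal (c0 - inverse (real (Suc k))) < Jinf J (\<eta>inf z)"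
    proof
      fix k :: nat
      have "ereal (c0 - inverse (real (Suc k))) < cinf" using c0 by simp
      also note Ebig
      finally have "\<exists>z\<in>seq_limsup D. ereal (c0 - inverse (real (Suc k))) < Jinf J (\<eta>inf z)"
        by (simp add: less_SUP_iff)
      thus "\<exists>z. z \<in> seq_limsup D \<and> ereal (c0 - inverse (real (Suc k))) < Jinf J (\<eta>inf z)" by blast
    qed
    then obtain z where zz0: "\<forall>k. z k \<in> seq_limsup D \<and> ereal (c0 - inverse (real (Suc k))) < Jinf J (\<eta>inf (z k))"
      using choice[OF exZ] by blast
    have zD: "\<And>k. z k \<in> seq_limsup D"
      and zg: "\<And>k. ereal (c0 - inverse (real (Suc k))) < Jinf J (\<eta>inf (z k))" using zz0 by auto
    have zle1: "Jinf J (\<eta>inf (z k)) \<le> Jinf J (z k)" for k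
      using etainf_decr sub2 zD by blast
    have zle2: "Jinf J (z k) \<le> cinf" for k using Dbar_J zD by blast
    have lowlim: "(\<lambda>k. ereal (c0 - inverse (real (Suc k)))) \<longlonglongrightarrow> cinf"
      unfolding c0 by (intro tendsto_ereal) (use tendsto_diff[OF tendsto_const LIMSEQ_inverse_real_of_nat, of c0] in simp)
    have ev1: "eventually (\<lambda>k. ereal (c0 - inverse (real (Suc k))) \<le> Jinf J (\<eta>inf (z k))) sequentially"
      using zg by (intro always_eventually allI less_imp_le)
    have ev2: "eventually (\<lambda>k. Jinf J (\<eta>inf (z k)) \<le> cinf) sequentially"
      using zle1 zle2 by (intro always_eventually allI) (rule order_trans)
    have t1: "(\<lambda>k. Jinf J (\<eta>inf (z k))) \<longlonglongrightarrow> cinf"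
      by (rule tendsto_sandwich[OF ev1 ev2 lowlim tendsto_const])
    have t2: "(\<lambda>k. Jinf J (z k)) \<longlonglongrightarrow> cinf"
      by (rule tendsto_sandwich[OF _ _ t1 tendsto_const]) (use zle1 zle2 in \<open>intro always_eventually allI; blast\<close>)+
    obtain r1 zz where r1: "strict_mono r1" and zzl: "(z \<circ> r1) \<longlonglongrightarrow> zz"
      and zzK: "zz \<in> Kset (Jinf J) \<eta>inf cinf" using PS_inf[OF t2 t1] by blast
    have zzD: "zz \<in> seq_limsup D" using closed_sequentially[OF Dbar_closed _ zzl] zD by simp
    obtain r w where r: "filterlim r at_top at_top" and w: "\<And>j. w j \<in> D (r j)"
      and wl: "w \<longlonglongrightarrow> zz" using zzD unfolding seq_limsup_def by blast
    have "\<forall>j. \<exists>x. x \<in> A (r j) \<and> w j = \<eta> (\<beta>s (r j)) x" using w unfolding D_def by blast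
    then obtain x where x: "\<forall>j. x j \<in> A (r j) \<and> w j = \<eta> (\<beta>s (r j)) (x j)"
      using choice[of "\<lambda>j x. x \<in> A (r j) \<and> w j = \<eta> (\<beta>s (r j)) x"] by blast
    have xA: "\<And>j. x j \<in> A (r j)" and wx: "\<And>j. w j = \<eta> (\<beta>s (r j)) (x j)" using x by auto
    have lr: "filterlim (\<lambda>j. \<beta>s (r j)) at_top sequentially" using filterlim_compose[OF lim r] .
    have zzJ: "Jinf J zz = cinf" using zzK unfolding Kset_def by simp
    have wlim: "(\<lambda>j. J (\<beta>s (r j)) (w j)) \<longlonglongrightarrow> cinf"
    proof (rule order_tendstoI)
      fix a assume "a < cinf"
      hence "a < (SUP \<beta>\<in>{0<..}. J \<beta> zz)" using zzJ unfolding Jinf_def by simp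
      hence "\<exists>\<beta>\<in>{0<..}. a < J \<beta> zz" by (simp only: less_SUP_iff)
      then obtain \<beta> where bp0: "\<beta> \<in> {0<..}" and ab: "a < J \<beta> zz" by blast
      have bp: "0 < \<beta>" using bp0 by simp
      have e1: "eventually (\<lambda>j. a < J \<beta> (w j)) sequentially" by (rule lsc_gt[OF lsc[OF bp] wl ab])
      have e2: "eventually (\<lambda>j. \<beta> \<le> \<beta>s (r j)) sequentially" using lr unfolding filterlim_at_top by blast
      show "eventually (\<lambda>j. a < J (\<beta>s (r j)) (w j)) sequentially" using e1 e2
      proof eventually_elim
        case (elim j)
        have "J \<beta> (w j) \<le> J (\<beta>s (r j)) (w j)" by (rule mono[OF bp elim(2)])
        with elim(1) show ?case by (rule less_le_trans)
      qed
    next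
      fix a assume "cinf < a"
      have "J (\<beta>s (r j)) (w j) < a" for j using DJ[OF w[of j]] \<open>cinf < a\<close> by (rule le_less_trans)
      thus "eventually (\<lambda>j. J (\<beta>s (r j)) (w j) < a) sequentially"
        by (intro always_eventually allI)
    qed
    have xle: "J (\<beta>s (r j)) (w j) \<le> J (\<beta>s (r j)) (x j)" for j
    proof -
      have "J (\<beta>s (r j)) (x j) \<le> cinf + 1" using Asub[of "r j"] xA[of j] by blast
      have "J (\<beta>s (r j)) (\<eta> (\<beta>s (r j)) (x j)) \<le> J (\<beta>s (r j)) (x j)"
        by (rule eta_decr[OF spec[OF pos, of "r j"] \<open>J (\<beta>s (r j)) (x j) \<le> cinf + 1\<close>])
      thus ?thesis by (simp only: wx)
    qed
    have ev3: "eventually (\<lambda>j. J (\<beta>s (r j)) (w j) \<le> J (\<beta>s (r j)) (x j)) sequentially"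
      by (intro always_eventually allI xle)
    have ev4: "eventually (\<lambda>j. J (\<beta>s (r j)) (x j) \<le> cinf) sequentially"
      by (intro always_eventually allI AJ xA)
    have xlim: "(\<lambda>j. J (\<beta>s (r j)) (x j)) \<longlonglongrightarrow> cinf"
      by (rule tendsto_sandwich[OF ev3 ev4 wlim tendsto_const])
    have wlim': "(\<lambda>j. J (\<beta>s (r j)) (\<eta> (\<beta>s (r j)) (x j))) \<longlonglongrightarrow> cinf"
      using wlim by (simp only: wx)
    have posr: "\<forall>n. 0 < \<beta>s (r n)" using pos by blast
    have "\<exists>xbar r2. strict_mono r2 \<and> (x \<circ> r2) \<longlonglongrightarrow> xbar \<and>
            (\<lambda>n. \<eta> (\<beta>s (r (r2 n))) (x (r2 n))) \<longlonglongrightarrow> xbar"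
      by (rule UPS[OF posr lr xlim wlim'])
    then obtain xbar r2 where r2: "strict_mono r2" and xl: "(x \<circ> r2) \<longlonglongrightarrow> xbar"
      and el: "(\<lambda>n. \<eta> (\<beta>s (r (r2 n))) (x (r2 n))) \<longlonglongrightarrow> xbar" by blast
    have "(w \<circ> r2) \<longlonglongrightarrow> zz" using LIMSEQ_subseq_LIMSEQ[OF wl r2] .
    hence "(\<lambda>n. \<eta> (\<beta>s (r (r2 n))) (x (r2 n))) \<longlonglongrightarrow> zz" using wx by (simp add: o_def)
    hence xbz: "xbar = zz" using el LIMSEQ_unique by blast
    have r2f: "filterlim r2 sequentially sequentially" using filterlim_subseq[OF r2] .
    have "zz \<in> Cstar J \<eta> cinf" unfolding Cstar_def
    proof (intro CollectI exI conjI)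
      show "\<forall>n. 0 < \<beta>s (r (r2 n))" using pos by blast
      show "filterlim (\<lambda>n. \<beta>s (r (r2 n))) at_top sequentially" using filterlim_compose[OF lr r2f] .
      show "(x \<circ> r2) \<longlonglongrightarrow> zz" using xl xbz by simp
      show "(\<lambda>n. J (\<beta>s (r (r2 n))) ((x \<circ> r2) n)) \<longlonglongrightarrow> cinf"
        using LIMSEQ_subseq_LIMSEQ[OF xlim r2] by (simp add: o_def)
      show "(\<lambda>n. J (\<beta>s (r (r2 n))) (\<eta> (\<beta>s (r (r2 n))) ((x \<circ> r2) n))) \<longlonglongrightarrow> cinf"
        using LIMSEQ_subseq_LIMSEQ[OF wlim' r2] by (simp add: o_def)
    qed
    moreover have "zz \<in> seq_limsup A" unfolding seq_limsup_def
    proof (intro CollectI exI conjI allI)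
      show "filterlim (\<lambda>n. r (r2 n)) at_top at_top" using filterlim_compose[OF r r2f] .
      show "(x \<circ> r2) j \<in> A (r (r2 j))" for j using xA by simp
      show "(x \<circ> r2) \<longlonglongrightarrow> zz" using xl xbz by simp
    qed
    ultimately show ?thesis using zzK by blast
  qed
  have exopt: "\<exists>A. optimal F (J \<beta>) (c \<beta>) A" if bp: "0 < \<beta>" for \<beta>
  proof -
    define cb where "cb = real_of_ereal (c \<beta>)"
    have cb: "c \<beta> = ereal cb" unfolding cb_def using ereal_real'[OF c_real[OF bp]] by simp
    have exB: "\<forall>n::nat. \<exists>B. B \<in> F \<and> (SUP x\<in>B. J \<beta> x) < ereal (cb + inverse (real (Suc n)))"
    proof
      fix n :: nat
      have "c \<beta> < ereal (cb + inverse (real (Suc n)))" using cb by simp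
      hence "\<exists>B\<in>F. (SUP x\<in>B. J \<beta> x) < ereal (cb + inverse (real (Suc n)))"
        unfolding c_def minimax_def by (simp add: INF_less_iff)
      thus "\<exists>B. B \<in> F \<and> (SUP x\<in>B. J \<beta> x) < ereal (cb + inverse (real (Suc n)))" by blast
    qed
    then obtain B where BB: "\<forall>n. B n \<in> F \<and> (SUP x\<in>B n. J \<beta> x) < ereal (cb + inverse (real (Suc n)))"
      using choice[OF exB] by blast
    have BF: "\<And>n. B n \<in> F"
      and Bs: "\<And>n. (SUP x\<in>B n. J \<beta> x) < ereal (cb + inverse (real (Suc n)))" using BB by auto
    have cbC: "cb \<le> c0" using cle[OF bp] cb c0 by simp
    have Bx: "J \<beta> x \<le> ereal (cb + inverse (real (Suc n)))" if "x \<in> B n" for n x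
    proof -
      have "J \<beta> x \<le> (SUP x\<in>B n. J \<beta> x)" using that by (rule SUP_upper)
      thus ?thesis using Bs[of n] by simp
    qed
    have Bsub: "B n \<subseteq> {x. J \<beta> x \<le> cinf + 1}" for n
    proof
      fix x assume "x \<in> B n"
      hence "J \<beta> x \<le> ereal (cb + inverse (real (Suc n)))" by (rule Bx)
      also have "\<dots> \<le> cinf + 1"
      proof -
        have "inverse (real (Suc n)) \<le> 1" by (simp add: field_simps)
        thus ?thesis using cbC c0 by simp
      qed
      finally show "x \<in> {x. J \<beta> x \<le> cinf + 1}" by simp
    qed
    have BbarF: "seq_limsup B \<in> F" using F_limsup[OF bp] BF Bsub by blast
    have "(SUP x\<in>seq_limsup B. J \<beta> x) \<le> c \<beta>"
    proof (rule SUP_least)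
      fix y assume "y \<in> seq_limsup B"
      then obtain r w where r: "filterlim r at_top at_top" and w: "\<And>j. w j \<in> B (r j)"
        and wl: "w \<longlonglongrightarrow> y" unfolding seq_limsup_def by blast
      have il: "(\<lambda>j. ereal (cb + inverse (real (Suc (r j))))) \<longlonglongrightarrow> ereal cb"
        using tendsto_add[OF tendsto_const filterlim_compose[OF LIMSEQ_inverse_real_of_nat r], of cb]
        by (intro tendsto_ereal) simp
      show "J \<beta> y \<le> c \<beta>" unfolding cb
      proof (rule lsc_le[OF lsc[OF bp] wl])
        fix t assume "ereal cb < t"
        hence "eventually (\<lambda>j. ereal (cb + inverse (real (Suc (r j)))) < t) sequentially"
          using order_tendstoD(2)[OF il] by blast
        thus "eventually (\<lambda>j. J \<beta> (w j) \<le> t) sequentially"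
        proof eventually_elim
          case (elim j)
          thus ?case using Bx[OF w[of j]] by simp
        qed
      qed
    qed
    moreover have "c \<beta> \<le> (SUP x\<in>seq_limsup B. J \<beta> x)" unfolding c_def using minimax_le[OF BbarF] by simp
    ultimately show ?thesis unfolding optimal_def using BbarF by (intro exI[of _ "seq_limsup B"]) auto
  qed
  define \<beta>s :: "nat \<Rightarrow> real" where "\<beta>s n = real (Suc n)" for n
  define A where "A n = (SOME A. optimal F (J (\<beta>s n)) (c (\<beta>s n)) A)" for n
  have bpos: "\<forall>n. 0 < \<beta>s n" unfolding \<beta>s_def by simp
  have blim: "filterlim \<beta>s at_top sequentially" unfolding \<beta>s_def
    by (subst filterlim_sequentially_Suc) (rule filterlim_real_sequentially)
  have Aopt: "\<forall>n. optimal F (J (\<beta>s n)) (c (\<beta>s n)) (A n)"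
    unfolding A_def using exopt bpos by (blast intro: someI_ex)
  have "Cstar J \<eta> cinf \<inter> Kset (Jinf J) \<eta>inf cinf \<noteq> {}" using main[OF bpos blim Aopt] by blast
  thus ?thesis using main by blast
qed

end
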